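(* Let $A$ be a sequence algebra and $X$ an essential homogeneous normed $A$-module. Then for every $x\in X$, $x=\lim_{N\to\infty}\mathbf P^N\cdot x$, where $\mathbf P^N:=\sum_{n=1}^N\mathbf p^n$.
   Context: Modules are contractive ($\|a\cdot x\|\le\|a\|\|x\|$). A sequence algebra is a normed algebra of complex sequences with coordinatewise operations containing $c_{00}$ (finite sequences) as a dense subalgebra, with $\|\mathbf p^n\|=1$, where $\mathbf p^n$ has $1$ in place $n$ and $0$ elsewhere. For $x\in X$, $x_n:=\mathbf p^n\cdot x$. $X$ is essential if the closed linear span of $\{a\cdot x:a\in A,x\in X\}$ is $X$; homogeneous if for $x,y\in X$, $\|x_n\|\le\|y_n\|$ for all $n$ implies $\|x\|\le\|y\|$. *)

theory Defs
  imports "HOL-Analysis.Analysis"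
begin

text \<open>Sequences are indexed by nat starting at 0 (coordinate 0 plays the role of the
paper's coordinate 1).\<close>

type_synonym cseq = "nat \<Rightarrow> complex"

definition unit_seq :: "nat \<Rightarrow> cseq" where
  "unit_seq n = (\<lambda>k. if k = n then 1 else 0)"

definition finite_seq :: "cseq \<Rightarrow> bool" where
  "finite_seq a \<longleftrightarrow> finite {n. a n \<noteq> 0}"

definition sequence_algebra :: "cseq set \<Rightarrow> (cseq \<Rightarrow> real) \<Rightarrow> bool" where
  "sequence_algebra SA nA \<longleftrightarrow>
     (\<forall>a\<in>SA. \<forall>b\<in>SA. (\<lambda>n. a n + b n) \<in> SA) \<and>
     (\<forall>a\<in>SA. \<forall>c. (\<lambda>n. c * a n) \<in> SA) \<and>
     (\<forall>a\<in>SA. \<forall>b\<in>SA. (\<lambda>n. a n * b n) \<in> SA) \<and>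
     (\<forall>a\<in>SA. 0 \<le> nA a) \<and>
     (\<forall>a\<in>SA. nA a = 0 \<longleftrightarrow> a = (\<lambda>n. 0)) \<and>
     (\<forall>a\<in>SA. \<forall>b\<in>SA. nA (\<lambda>n. a n + b n) \<le> nA a + nA b) \<and>
     (\<forall>a\<in>SA. \<forall>c. nA (\<lambda>n. c * a n) = cmod c * nA a) \<and>
     (\<forall>a\<in>SA. \<forall>b\<in>SA. nA (\<lambda>n. a n * b n) \<le> nA a * nA b) \<and>
     {a. finite_seq a} \<subseteq> SA \<and>
     (\<forall>a\<in>SA. \<forall>e>0. \<exists>b. finite_seq b \<and> nA (\<lambda>n. a n - b n) < e) \<and>
     (\<forall>n. nA (unit_seq n) = 1)"

definition complex_normed_space :: "(complex \<Rightarrow> 'x::real_normed_vector \<Rightarrow> 'x) \<Rightarrow> bool" where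
  "complex_normed_space sc \<longleftrightarrow>
     (\<forall>c d x. sc (c + d) x = sc c x + sc d x) \<and>
     (\<forall>c x y. sc c (x + y) = sc c x + sc c y) \<and>
     (\<forall>c d x. sc (c * d) x = sc c (sc d x)) \<and>
     (\<forall>r x. sc (complex_of_real r) x = r *\<^sub>R x) \<and>
     (\<forall>c x. norm (sc c x) = cmod c * norm x)"

definition normed_module ::
  "cseq set \<Rightarrow> (cseq \<Rightarrow> real) \<Rightarrow> (complex \<Rightarrow> 'x::real_normed_vector \<Rightarrow> 'x)
     \<Rightarrow> (cseq \<Rightarrow> 'x \<Rightarrow> 'x) \<Rightarrow> bool" where
  "normed_module SA nA sc act \<longleftrightarrow>
     complex_normed_space sc \<and>
     (\<forall>a\<in>SA. \<forall>b\<in>SA. \<forall>x. act (\<lambda>n. a n + b n) x = act a x + act b x) \<and>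
     (\<forall>a\<in>SA. \<forall>c x. act (\<lambda>n. c * a n) x = sc c (act a x)) \<and>
     (\<forall>a\<in>SA. \<forall>x y. act a (x + y) = act a x + act a y) \<and>
     (\<forall>a\<in>SA. \<forall>c x. act a (sc c x) = sc c (act a x)) \<and>
     (\<forall>a\<in>SA. \<forall>b\<in>SA. \<forall>x. act (\<lambda>n. a n * b n) x = act a (act b x)) \<and>
     (\<forall>a\<in>SA. \<forall>x. norm (act a x) \<le> nA a * norm x)"

definition cspan :: "(complex \<Rightarrow> 'x::real_normed_vector \<Rightarrow> 'x) \<Rightarrow> 'x set \<Rightarrow> 'x set" where
  "cspan sc S = {y. \<exists>(F::nat set) c v. finite F \<and> (\<forall>i\<in>F. v i \<in> S) \<and>
                    y = (\<Sum>i\<in>F. sc (c i) (v i))}"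

definition essential_module ::
  "cseq set \<Rightarrow> (complex \<Rightarrow> 'x::real_normed_vector \<Rightarrow> 'x) \<Rightarrow> (cseq \<Rightarrow> 'x \<Rightarrow> 'x) \<Rightarrow> bool" where
  "essential_module SA sc act \<longleftrightarrow>
     closure (cspan sc {act a x | a x. a \<in> SA}) = UNIV"

definition homogeneous_module :: "(cseq \<Rightarrow> 'x::real_normed_vector \<Rightarrow> 'x) \<Rightarrow> bool" where
  "homogeneous_module act \<longleftrightarrow>
     (\<forall>x y. (\<forall>n. norm (act (unit_seq n) x) \<le> norm (act (unit_seq n) y)) \<longrightarrow> norm x \<le> norm y)"

end

theory Submission
  imports Defs
begin

lemma P_eq: "(\<lambda>k. \<Sum>n<N. unit_seq n k) = (\<lambda>k. if k < N then 1 else 0)"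
  by (simp add: unit_seq_def)

theorem proposition1p5:
  fixes SA :: "cseq set" and nA :: "cseq \<Rightarrow> real"
    and sc :: "complex \<Rightarrow> 'x::real_normed_vector \<Rightarrow> 'x"
    and act :: "cseq \<Rightarrow> 'x \<Rightarrow> 'x"
  assumes "sequence_algebra SA nA"
    and "normed_module SA nA sc act"
    and "essential_module SA sc act"
    and "homogeneous_module act"
  shows "\<forall>x. (\<lambda>N. act (\<lambda>k. \<Sum>n<N. unit_seq n k) x) \<longlonglongrightarrow> x"
proof -
  define P :: "nat \<Rightarrow> cseq" where "P N = (\<lambda>k::nat. if k < N then (1::complex) else 0)" for N
  have SAadd: "\<And>a b. a \<in> SA \<Longrightarrow> b \<in> SA \<Longrightarrow> (\<lambda>n. a n + b n) \<in> SA"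
    and SAsc: "\<And>a c. a \<in> SA \<Longrightarrow> (\<lambda>n. c * a n) \<in> SA"
    and SAfin: "\<And>b. finite_seq b \<Longrightarrow> b \<in> SA"
    and SAapprox: "\<And>a e. a \<in> SA \<Longrightarrow> e > 0 \<Longrightarrow> \<exists>b. finite_seq b \<and> nA (\<lambda>n. a n - b n) < e"
    using assms(1) unfolding sequence_algebra_def by blast+
  have cns: "complex_normed_space sc"
    and actadd1: "\<And>a b x. a \<in> SA \<Longrightarrow> b \<in> SA \<Longrightarrow> act (\<lambda>n. a n + b n) x = act a x + act b x"
    and actsc1: "\<And>a c x. a \<in> SA \<Longrightarrow> act (\<lambda>n. c * a n) x = sc c (act a x)"
    and actadd2: "\<And>a x y. a \<in> SA \<Longrightarrow> act a (x + y) = act a x + act a y"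
    and actsc2: "\<And>a c x. a \<in> SA \<Longrightarrow> act a (sc c x) = sc c (act a x)"
    and actmul: "\<And>a b x. a \<in> SA \<Longrightarrow> b \<in> SA \<Longrightarrow> act (\<lambda>n. a n * b n) x = act a (act b x)"
    and actnorm: "\<And>a x. a \<in> SA \<Longrightarrow> norm (act a x) \<le> nA a * norm x"
    using assms(2) unfolding normed_module_def by blast+
  have scadd: "\<And>c x y. sc c (x + y) = sc c x + sc c y"
    and scr: "\<And>r x. sc (complex_of_real r) x = r *\<^sub>R x"
    and scnorm: "\<And>c x. norm (sc c x) = cmod c * norm x"
    using cns unfolding complex_normed_space_def by blast+
  have hom: "\<And>x y. (\<forall>n. norm (act (unit_seq n) x) \<le> norm (act (unit_seq n) y)) \<Longrightarrow> norm x \<le> norm y"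
    using assms(4) unfolding homogeneous_module_def by blast
  have finP: "finite_seq (P N)" for N
    unfolding finite_seq_def P_def by (rule finite_subset[of _ "{..<N}"]) auto
  have finU: "finite_seq (unit_seq n)" for n
    unfolding finite_seq_def unit_seq_def by (rule finite_subset[of _ "{n}"]) auto
  have PSA: "P N \<in> SA" for N using SAfin finP by blast
  have USA: "unit_seq n \<in> SA" for n using SAfin finU by blast
  have sc0: "sc 0 y = 0" for y using scr[of 0 y] by simp
  have act0: "act (\<lambda>k. 0) u = 0" for u
    using actsc1[OF USA[of 0], of 0 u] sc0 by simp
  have actdiff: "act a (u - v) = act a u - act a v" if "a \<in> SA" for a u v
  proof -
    have "act a ((u - v) + v) = act a (u - v) + act a v" using actadd2[OF that] .
    then show ?thesis by (simp add: algebra_simps)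
  qed
  have scdiff: "sc c (u - v) = sc c u - sc c v" for c u v
  proof -
    have "sc c ((u - v) + v) = sc c (u - v) + sc c v" using scadd .
    then show ?thesis by (simp add: algebra_simps)
  qed
  have contr: "norm (act (P N) u) \<le> norm u" for N u
  proof (rule hom, intro allI)
    fix n
    have "act (unit_seq n) (act (P N) u) = act (\<lambda>k. unit_seq n k * P N k) u"
      using actmul[OF USA PSA] by simp
    also have "(\<lambda>k. unit_seq n k * P N k) = (if n < N then unit_seq n else (\<lambda>k. 0))"
      by (auto simp: unit_seq_def P_def)
    finally have eq: "act (unit_seq n) (act (P N) u) = act (if n < N then unit_seq n else (\<lambda>k. 0)) u" .
    show "norm (act (unit_seq n) (act (P N) u)) \<le> norm (act (unit_seq n) u)"
    proof (cases "n < N")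
      case True then show ?thesis using eq by simp
    next
      case False then show ?thesis using eq act0 by simp
    qed
  qed
  define G where "G = {z. (\<lambda>N. act (P N) z) \<longlonglongrightarrow> z}"
  have closedG: "z \<in> G" if H: "\<And>e. e > 0 \<Longrightarrow> \<exists>w\<in>G. norm (z - w) < e" for z
    unfolding G_def mem_Collect_eq LIMSEQ_iff
  proof (intro allI impI)
    fix r :: real assume r: "r > 0"
    then obtain w where w: "w \<in> G" "norm (z - w) < r/3" using H[of "r/3"] by auto
    have wl: "(\<lambda>N. act (P N) w) \<longlonglongrightarrow> w" using w(1) unfolding G_def by simp
    have r3: "r/3 > 0" using r by simp
    obtain no where no: "\<forall>n\<ge>no. norm (act (P n) w - w) < r/3"
      using wl r3 unfolding LIMSEQ_iff by blast
    show "\<exists>no. \<forall>n\<ge>no. norm (act (P n) z - z) < r"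
    proof (intro exI allI impI)
      fix n assume "n \<ge> no"
      have eq: "act (P n) z - z = act (P n) (z - w) + (act (P n) w - w) + (w - z)"
        using actdiff[OF PSA, of n z w] by simp
      have "norm (act (P n) z - z) \<le> norm (act (P n) (z - w)) + norm (act (P n) w - w) + norm (w - z)"
      proof -
        have "norm (act (P n) (z - w) + (act (P n) w - w) + (w - z)) \<le> norm (act (P n) (z - w) + (act (P n) w - w)) + norm (w - z)"
          by (rule norm_triangle_ineq)
        moreover have "norm (act (P n) (z - w) + (act (P n) w - w)) \<le> norm (act (P n) (z - w)) + norm (act (P n) w - w)"
          by (rule norm_triangle_ineq)
        ultimately show ?thesis unfolding eq by linarith
      qed
      also have "\<dots> < r/3 + r/3 + r/3"
      proof -
        have "norm (act (P n) (z - w)) \<le> norm (z - w)" by (rule contr)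
        moreover have "norm (act (P n) w - w) < r/3" using no \<open>n \<ge> no\<close> by blast
        moreover have "norm (w - z) < r/3" using w(2) by (simp add: norm_minus_commute)
        ultimately show ?thesis using w(2) by linarith
      qed
      finally show "norm (act (P n) z - z) < r" by simp
    qed
  qed
  have finG: "act b x \<in> G" if "finite_seq b" for b x
  proof -
    have "finite {n. b n \<noteq> 0}" using that unfolding finite_seq_def .
    then obtain M where M0: "{n. b n \<noteq> 0} \<subseteq> {..<M}"
      using finite_nat_bounded by blast
    have M: "\<forall>k\<in>{n. b n \<noteq> 0}. k < M" using M0 by auto
    have "\<forall>N\<ge>M. act (P N) (act b x) = act b x"
    proof (intro allI impI)
      fix N assume "N \<ge> M"
      have e1: "(\<lambda>k. P N k * b k) = b" proof
        fix k show "P N k * b k = b k" using M \<open>N \<ge> M\<close> by (cases "b k = 0") (auto simp: P_def)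
      qed
      have "act (\<lambda>k. P N k * b k) x = act (P N) (act b x)"
        using actmul[OF PSA SAfin[OF that]] .
      then show "act (P N) (act b x) = act b x" unfolding e1 by simp
    qed
    then have "eventually (\<lambda>N. act (P N) (act b x) = act b x) sequentially"
      by (auto simp: eventually_sequentially)
    then show ?thesis unfolding G_def by (simp add: tendsto_eventually)
  qed
  have SAG: "act a x \<in> G" if a: "a \<in> SA" for a x
  proof (rule closedG)
    fix e :: real assume e: "e > 0"
    have pos: "e / (norm x + 1) > 0"
      using e by (intro divide_pos_pos) (auto intro: add_nonneg_pos)
    obtain b where b: "finite_seq b" "nA (\<lambda>n. a n - b n) < e / (norm x + 1)"
      using SAapprox[OF a pos] by blast
    have bSA: "b \<in> SA" using SAfin b(1) .
    have dSA: "(\<lambda>n. a n - b n) \<in> SA"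
      using SAadd[OF a SAsc[OF bSA, of "-1"]] by simp
    have "act a x = act (\<lambda>n. (a n - b n) + b n) x" by simp
    also have "\<dots> = act (\<lambda>n. a n - b n) x + act b x" using actadd1[OF dSA bSA] .
    finally have "act a x - act b x = act (\<lambda>n. a n - b n) x" by simp
    then have "norm (act a x - act b x) \<le> nA (\<lambda>n. a n - b n) * norm x"
      using actnorm[OF dSA] by simp
    also have "\<dots> \<le> e / (norm x + 1) * norm x"
      using b(2) by (intro mult_right_mono) auto
    also have "\<dots> < e"
    proof -
      have "e / (norm x + 1) * norm x = e * (norm x / (norm x + 1))" by simp
      also have "\<dots> < e * 1"
      proof (intro mult_strict_left_mono)
        have "norm x + 1 > 0" by (simp add: add_nonneg_pos)
        then show "norm x / (norm x + 1) < 1" by (simp add: divide_less_eq)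
      qed (use e in auto)
      finally show ?thesis by simp
    qed
    finally show "\<exists>w\<in>G. norm (act a x - w) < e" using finG[OF b(1)] by blast
  qed
  have G0: "0 \<in> G"
    unfolding G_def using act0 actdiff[OF PSA, of _ 0 0] by simp
  have Gadd: "u + v \<in> G" if "u \<in> G" "v \<in> G" for u v
    using that unfolding G_def by (simp add: actadd2[OF PSA] tendsto_add)
  have Gsc: "sc c u \<in> G" if "u \<in> G" for c u
  proof -
    have "(\<lambda>N. act (P N) u - u) \<longlonglongrightarrow> 0" using that unfolding G_def
      using LIM_zero by blast
    then have "(\<lambda>N. cmod c * norm (act (P N) u - u)) \<longlonglongrightarrow> 0"
      using tendsto_mult_right_zero tendsto_norm_zero by blast
    then have "(\<lambda>N. norm (sc c (act (P N) u) - sc c u)) \<longlonglongrightarrow> 0"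
      by (simp add: scdiff[symmetric] scnorm)
    then have "(\<lambda>N. sc c (act (P N) u) - sc c u) \<longlonglongrightarrow> 0"
      using tendsto_norm_zero_iff by blast
    then show ?thesis unfolding G_def using LIM_zero_cancel by (force simp: actsc2[OF PSA])
  qed
  have spanG: "cspan sc {act a x | a x. a \<in> SA} \<subseteq> G"
  proof
    fix y assume "y \<in> cspan sc {act a x | a x. a \<in> SA}"
    then obtain F :: "nat set" and c v where F: "finite F" "\<forall>i\<in>F. v i \<in> {act a x | a x. a \<in> SA}"
      and y: "y = (\<Sum>i\<in>F. sc (c i) (v i))" unfolding cspan_def by blast
    have "\<forall>i\<in>F. v i \<in> G" using F(2) SAG by fastforce
    moreover have "(\<forall>i\<in>F. v i \<in> G) \<longrightarrow> (\<Sum>i\<in>F. sc (c i) (v i)) \<in> G" using F(1)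
      by (induction F rule: finite_induct) (auto simp: G0 Gadd Gsc)
    ultimately have "(\<Sum>i\<in>F. sc (c i) (v i)) \<in> G" by blast
    then show "y \<in> G" using y by simp
  qed
  have "z \<in> G" for z
  proof -
    have "z \<in> closure (cspan sc {act a x | a x. a \<in> SA})"
      using assms(3) unfolding essential_module_def by simp
    then have "\<forall>e>0. \<exists>y\<in>cspan sc {act a x | a x. a \<in> SA}. dist y z < e"
      by (simp only: closure_approachable)
    then show ?thesis
    proof (intro closedG)
      fix e :: real assume "\<forall>e>0. \<exists>y\<in>cspan sc {act a x | a x. a \<in> SA}. dist y z < e" "e > 0"
      then obtain y where "y \<in> cspan sc {act a x | a x. a \<in> SA}" "dist y z < e" by blast
      then show "\<exists>w\<in>G. norm (z - w) < e" using spanG by (auto simp: dist_norm norm_minus_commute)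
    qed
  qed
  then show ?thesis unfolding G_def P_eq P_def by blast
qed

end
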